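(* Let $M,N\in\mathbb{S}^{q+r}$. If there exist scalars $\alpha\ge 0$ and $\beta>0$ such that $M-\alpha N\ge\begin{bmatrix}\beta I_q&0\\0&0\end{bmatrix}$ ( * ), then $\mathcal{Z}_r(N)\subseteq\mathcal{Z}_r^+(M)$. Moreover, if $N\in\boldsymbol{\Pi}_{q,r}$ and $M_{22}\le 0$, then $\mathcal{Z}_r(N)\subseteq\mathcal{Z}_r^+(M)$ if and only if there exist $\alpha\ge 0$ and $\beta>0$ such that ( * ) holds.
   Context: $\mathbb{S}^k$ denotes the real symmetric $k\times k$ matrices; for symmetric matrices, $A\ge 0$ ($A>0$) means positive semidefinite (definite), $A\le B$ means $B-A\ge0$. $A^\dagger$ is the Moore–Penrose pseudo-inverse. Any $\Pi\in\mathbb{S}^{q+r}$ (in particular $M,N$) is partitioned as $\Pi=\begin{bmatrix}\Pi_{11}&\Pi_{12}\\ \Pi_{21}&\Pi_{22}\end{bmatrix}$ with $\Pi_{11}\in\mathbb{S}^q$, $\Pi_{22}\in\mathbb{S}^r$. The generalized Schur complement is $\Pi\mid\Pi_{22}:=\Pi_{11}-\Pi_{12}\Pi_{22}^\dagger\Pi_{21}$. The set $\boldsymbol{\Pi}_{q,r}$ consists of all $\Pi\in\mathbb{S}^{q+r}$ with $\Pi_{22}\le 0$, $\Pi\mid\Pi_{22}\ge 0$ and $\ker\Pi_{22}\subseteq\ker\Pi_{12}$. Define $\mathcal{Z}_r(\Pi)=\{Z\in\mathbb{R}^{r\times q}:\begin{bmatrix}I_q\\ Z\end{bmatrix}^\top\Pi\begin{bmatrix}I_q\\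 Z\end{bmatrix}\ge 0\}$ and $\mathcal{Z}_r^+(\Pi)$ the same with $>0$. *)

theory Defs
  imports "HOL-Analysis.Analysis"
begin

text \<open>Matrices in S^(q+r) are represented as real^('q::finite+'r::finite)^('q+'r); the index type
  'q + 'r (disjoint sum) gives the block partition: Inl indices are the first q,
  Inr indices the last r coordinates.\<close>

definition symmetric_mat :: "real^'n^'n \<Rightarrow> bool" where
  "symmetric_mat A \<longleftrightarrow> transpose A = A"

definition psd :: "real^'n^'n \<Rightarrow> bool" where
  "psd A \<longleftrightarrow> (\<forall>x. 0 \<le> x \<bullet> (A *v x))"

definition pd :: "real^'n^'n \<Rightarrow> bool" where
  "pd A \<longleftrightarrow> (\<forall>x. x \<noteq> 0 \<longrightarrow> 0 < x \<bullet> (A *v x))"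

text \<open>Loewner order A \<le> B iff B - A is positive semidefinite.\<close>
definition loewner_le :: "real^'n^'n \<Rightarrow> real^'n^'n \<Rightarrow> bool" where
  "loewner_le A B \<longleftrightarrow> psd (B - A)"

text \<open>Moore-Penrose pseudo-inverse, defined by the four Penrose conditions.\<close>
definition pinv :: "real^'n^'m \<Rightarrow> real^'m^'n" where
  "pinv A = (THE X. A ** X ** A = A \<and> X ** A ** X = X \<and>
              transpose (A ** X) = A ** X \<and> transpose (X ** A) = X ** A)"

definition blk11 :: "real^('q::finite+'r::finite)^('q+'r) \<Rightarrow> real^'q^'q" where
  "blk11 P = (\<chi> i j. P $ Inl i $ Inl j)"
definition blk12 :: "real^('q::finite+'r::finite)^('q+'r) \<Rightarrow> real^'r^'q" where
  "blk12 P = (\<chi> i j. P $ Inl i $ Inr j)"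
definition blk21 :: "real^('q::finite+'r::finite)^('q+'r) \<Rightarrow> real^'q^'r" where
  "blk21 P = (\<chi> i j. P $ Inr i $ Inl j)"
definition blk22 :: "real^('q::finite+'r::finite)^('q+'r) \<Rightarrow> real^'r^'r" where
  "blk22 P = (\<chi> i j. P $ Inr i $ Inr j)"

text \<open>Generalized Schur complement P | P22.\<close>
definition schur :: "real^('q::finite+'r::finite)^('q+'r) \<Rightarrow> real^'q^'q" where
  "schur P = blk11 P - blk12 P ** pinv (blk22 P) ** blk21 P"

definition ker_mat :: "real^'n^'m \<Rightarrow> (real^'n) set" where
  "ker_mat A = {x. A *v x = 0}"

text \<open>The set Pi_{q,r}.\<close>
definition PiSet :: "(real^('q::finite+'r::finite)^('q+'r)) set" where
  "PiSet = {P. symmetric_mat P \<and> loewner_le (blk22 P) 0 \<and> psd (schur P) \<and>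
              ker_mat (blk22 P) \<subseteq> ker_mat (blk12 P)}"

text \<open>The matrix [I_q; Z].\<close>
definition stackI :: "real^'q^'r \<Rightarrow> real^'q^('q+'r)" where
  "stackI Z = (\<chi> i j. case i of Inl a \<Rightarrow> (mat 1 :: real^'q^'q) $ a $ j | Inr b \<Rightarrow> Z $ b $ j)"

definition Zr :: "real^('q::finite+'r::finite)^('q+'r) \<Rightarrow> (real^'q^'r) set" where
  "Zr P = {Z. psd (transpose (stackI Z) ** P ** stackI Z)}"

definition Zr_plus :: "real^('q::finite+'r::finite)^('q+'r) \<Rightarrow> (real^'q^'r) set" where
  "Zr_plus P = {Z. pd (transpose (stackI Z) ** P ** stackI Z)}"

text \<open>The block matrix [beta I_q, 0; 0, 0].\<close>
definition blkdiagI :: "real \<Rightarrow> real^('q::finite+'r::finite)^('q+'r)" where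
  "blkdiagI \<beta> = (\<chi> i j. case (i, j) of (Inl a, Inl b) \<Rightarrow> (if a = b then \<beta> else 0) | _ \<Rightarrow> 0)"

end

theory Submission
  imports Defs
begin


lemma inner_transpose: "(u::real^'m) \<bullet> (A *v w) = (transpose A *v u) \<bullet> (w::real^'n)"
  by (simp add: dot_lmul_matrix)

lemma sym_bil: "transpose A = A \<Longrightarrow> (w::real^'n) \<bullet> (A *v u) = u \<bullet> (A *v w)"
  by (metis inner_transpose inner_commute)

lemma mat_eq_inner:
  fixes A B :: "real^'n^'m"
  assumes "\<And>u v. u \<bullet> (A *v v) = u \<bullet> (B *v v)"
  shows "A = B"
proof -
  have "A *v v = B *v v" for v
  proof -
    have "(A *v v - B *v v) \<bullet> (A *v v - B *v v) = 0"
      using assms[of "A *v v - B *v v" v] by (simp add: inner_diff_right)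
    then show ?thesis by simp
  qed
  then show ?thesis by (simp add: matrix_eq)
qed

lemma transpose_eq_inner:
  fixes A :: "real^'n^'n"
  assumes "\<And>u v. u \<bullet> (A *v v) = (A *v u) \<bullet> v"
  shows "transpose A = A"
  by (rule mat_eq_inner) (metis assms inner_transpose inner_commute)

definition penrose :: "real^'n^'m \<Rightarrow> real^'m^'n \<Rightarrow> bool" where
  "penrose A X \<longleftrightarrow> A ** X ** A = A \<and> X ** A ** X = X \<and>
              transpose (A ** X) = A ** X \<and> transpose (X ** A) = X ** A"

lemma penrose_unique:
  assumes "penrose A X" "penrose A Y" shows "X = Y"
proof -
  have a1: "A ** X ** A = A" and a2: "X ** A ** X = X" and a3: "transpose (A ** X) = A ** X"
    and a4: "transpose (X ** A) = X ** A"
    and b1: "A ** Y ** A = A" and b2: "Y ** A ** Y = Y" and b3: "transpose (A ** Y) = A ** Y"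
    and b4: "transpose (Y ** A) = Y ** A"
    using assms by (auto simp: penrose_def)
  have "X = X ** (A ** X)" using a2 by (simp add: matrix_mul_assoc)
  also have "\<dots> = X ** transpose (A ** X)" using a3 by simp
  also have "\<dots> = X ** transpose X ** transpose A" by (simp add: matrix_transpose_mul matrix_mul_assoc)
  also have "\<dots> = X ** transpose X ** transpose (A ** Y ** A)" using b1 by simp
  also have "\<dots> = X ** (transpose (A ** X) ** transpose (A ** Y))"
    by (simp add: matrix_transpose_mul matrix_mul_assoc)
  also have "\<dots> = X ** A ** Y" using a3 b3 a1 by (metis matrix_mul_assoc)
  finally have X: "X = X ** A ** Y" .
  have "Y = (Y ** A) ** Y" using b2 by (simp add: matrix_mul_assoc)
  also have "\<dots> = transpose (Y ** A) ** Y" using b4 by simp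
  also have "\<dots> = transpose A ** transpose Y ** Y" by (simp add: matrix_transpose_mul)
  also have "\<dots> = transpose (A ** X ** A) ** transpose Y ** Y" using a1 by simp
  also have "\<dots> = (transpose (X ** A) ** transpose (Y ** A)) ** Y"
    by (simp add: matrix_transpose_mul matrix_mul_assoc)
  also have "\<dots> = X ** A ** Y" using a4 b4 b2 by (metis matrix_mul_assoc)
  finally show ?thesis using X by simp
qed

lemma pinv_eq: assumes "penrose A X" shows "pinv A = X"
proof -
  have "(THE X. penrose A X) = X"
    by (rule the_equality) (use assms penrose_unique in blast)+
  then show ?thesis unfolding pinv_def penrose_def by simp
qed



lemma pinv_sym_exists:
  fixes A :: "real^'n^'n"
  assumes sA: "transpose A = A"
  shows "\<exists>X. penrose A X"
proof -
  define V where "V = range (\<lambda>c. A *v c)"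
  have subV: "subspace V" unfolding V_def
    by (rule linear_subspace_image[OF matrix_vector_mul_linear subspace_UNIV])
  have spanV: "span V = V" using subV by (simp add: span_eq_iff)
  have AV: "A *v c \<in> V" for c unfolding V_def by auto
  have kerorth: "A *v k = 0 \<Longrightarrow> v \<in> V \<Longrightarrow> k \<bullet> v = 0" for k v
    unfolding V_def using sym_bil[OF sA, of k] by auto
  have orthker: "(\<forall>v\<in>V. z \<bullet> v = 0) \<Longrightarrow> A *v z = 0" for z
  proof -
    assume h: "\<forall>v\<in>V. z \<bullet> v = 0"
    have "(A *v z) \<bullet> (A *v z) = z \<bullet> (A *v (A *v z))" using sym_bil[OF sA] by metis
    also have "\<dots> = 0" using h AV by auto
    finally show ?thesis by simp
  qed
  define good where "good b c \<longleftrightarrow> c \<in> V \<and> (\<forall>v\<in>V. (A *v c - b) \<bullet> v = 0)" for b c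
  have ex: "\<exists>c. good b c" for b
  proof -
    obtain b1 b2 where b1: "b1 \<in> span V" and b2: "\<And>w. w \<in> span V \<Longrightarrow> orthogonal b2 w"
      and bb: "b = b1 + b2"
      using orthogonal_subspace_decomp_exists[of V b] by blast
    obtain e where e: "b1 = A *v e" using b1 spanV unfolding V_def by auto
    obtain e1 e2 where e1: "e1 \<in> span V" and e2: "\<And>w. w \<in> span V \<Longrightarrow> orthogonal e2 w"
      and ee: "e = e1 + e2"
      using orthogonal_subspace_decomp_exists[of V e] by blast
    have "A *v e2 = 0" using orthker e2 spanV by (auto simp: orthogonal_def)
    then have "A *v e1 = b1" using e ee by (simp add: matrix_vector_right_distrib)
    then have "good b e1" using e1 b2 bb unfolding good_def
      by (auto simp: orthogonal_def spanV)
    then show ?thesis by blast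
  qed
  have uniq: "good b c \<Longrightarrow> good b c' \<Longrightarrow> c = c'" for b c c'
  proof -
    assume g: "good b c" "good b c'"
    have dV: "c - c' \<in> V" using g subV unfolding good_def by (auto intro: subspace_diff)
    have "(A *v (c - c')) \<bullet> v = (A *v c - b) \<bullet> v - (A *v c' - b) \<bullet> v" for v
      by (simp add: matrix_vector_mult_diff_distrib inner_diff_left)
    then have "\<forall>v\<in>V. (A *v (c - c')) \<bullet> v = 0" using g unfolding good_def by simp
    then have "(A *v (c - c')) \<bullet> (A *v (c - c')) = 0" using AV by blast
    then have k: "A *v (c - c') = 0" by simp
    have "(c - c') \<bullet> (c - c') = 0" using kerorth[OF k dV] .
    then show ?thesis by simp
  qed
  define Xf where "Xf b = (THE c. good b c)" for b
  have Xg: "good b (Xf b)" for b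
    unfolding Xf_def using ex uniq by (metis theI)
  have Xeq: "good b c \<Longrightarrow> Xf b = c" for b c using Xg uniq by blast
  have lin: "linear Xf"
  proof (rule linearI)
    fix b1 b2
    have e: "(A *v (Xf b1 + Xf b2) - (b1 + b2)) \<bullet> v = (A *v Xf b1 - b1) \<bullet> v + (A *v Xf b2 - b2) \<bullet> v" for v
      by (simp add: matrix_vector_right_distrib inner_diff_left inner_add_left)
    show "Xf (b1 + b2) = Xf b1 + Xf b2"
      apply (rule Xeq)
      using Xg[of b1] Xg[of b2] subV e unfolding good_def
      by (simp add: subspace_add)
  next
    fix r b
    have e: "(A *v (r *\<^sub>R Xf b) - r *\<^sub>R b) \<bullet> v = r * ((A *v Xf b - b) \<bullet> v)" for v
      by (simp add: matrix_vector_mult_scaleR inner_diff_left right_diff_distrib)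
    show "Xf (r *\<^sub>R b) = r *\<^sub>R Xf b"
      apply (rule Xeq)
      using Xg[of b] subV e unfolding good_def
      by (simp add: subspace_scale)
  qed
  define X where "X = matrix Xf"
  have Xv: "X *v b = Xf b" for b unfolding X_def using lin by (metis matrix_vector_mul(2))
  \<comment> \<open>AXA = A\<close>
  have AXz: "A *v Xf (A *v z) = A *v z" for z
  proof -
    have g: "good (A *v z) (Xf (A *v z))" by (rule Xg)
    then have "\<forall>v\<in>V. (A *v Xf (A *v z) - A *v z) \<bullet> v = 0" unfolding good_def by auto
    moreover have "A *v Xf (A *v z) - A *v z \<in> V"
      using AV subV by (auto intro: subspace_diff)
    ultimately have "(A *v Xf (A *v z) - A *v z) \<bullet> (A *v Xf (A *v z) - A *v z) = 0" by blast
    then show ?thesis by simp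
  qed
  have p1: "A ** X ** A = A"
    by (simp add: matrix_eq Xv AXz flip: matrix_vector_mul_assoc)
  have p2: "X ** A ** X = X"
  proof -
    have "Xf (A *v Xf b) = Xf b" for b
      by (rule Xeq) (use Xg[of b] in \<open>auto simp: good_def\<close>)
    then show ?thesis by (simp add: matrix_eq Xv flip: matrix_vector_mul_assoc)
  qed
  have p3: "transpose (A ** X) = A ** X"
  proof (rule transpose_eq_inner)
    fix u v
    have q: "w \<bullet> (A *v Xf b) = (A *v Xf w) \<bullet> (A *v Xf b)" for w b
    proof -
      have "(A *v Xf w - w) \<bullet> (A *v Xf b) = 0" using Xg[of w] AV unfolding good_def by auto
      then show ?thesis by (simp add: inner_diff_left)
    qed
    show "u \<bullet> ((A ** X) *v v) = ((A ** X) *v u) \<bullet> v"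
      using q[of u v] q[of v u] by (simp add: Xv inner_commute flip: matrix_vector_mul_assoc)
  qed
  have p4: "transpose (X ** A) = X ** A"
  proof (rule transpose_eq_inner)
    fix u v
    have q: "w \<bullet> Xf (A *v b) = Xf (A *v w) \<bullet> Xf (A *v b)" for w b
    proof -
      have "A *v (w - Xf (A *v w)) = 0" using AXz[of w] by (simp add: matrix_vector_mult_diff_distrib)
      moreover have "Xf (A *v b) \<in> V" using Xg unfolding good_def by auto
      ultimately have "(w - Xf (A *v w)) \<bullet> Xf (A *v b) = 0" using kerorth by blast
      then show ?thesis by (simp add: inner_diff_left)
    qed
    show "u \<bullet> ((X ** A) *v v) = ((X ** A) *v u) \<bullet> v"
      using q[of u v] q[of v u] by (simp add: Xv inner_commute flip: matrix_vector_mul_assoc)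
  qed
  show ?thesis using p1 p2 p3 p4 unfolding penrose_def by blast
qed

lemma pinv_sym:
  fixes A :: "real^'n^'n"
  assumes sA: "transpose A = A"
  shows "A ** pinv A ** A = A" "pinv A ** A ** pinv A = pinv A" "transpose (pinv A) = pinv A"
proof -
  obtain X where X: "penrose A X" using pinv_sym_exists[OF sA] by blast
  have P: "pinv A = X" using pinv_eq[OF X] .
  have "penrose A (transpose X)"
    using X sA unfolding penrose_def
    by (metis matrix_transpose_mul matrix_mul_assoc transpose_transpose)
  then have "transpose X = X" using penrose_unique[OF _ X] by blast
  then show "A ** pinv A ** A = A" "pinv A ** A ** pinv A = pinv A" "transpose (pinv A) = pinv A"
    using X P unfolding penrose_def by auto
qed



definition xp :: "real^('q::finite+'r::finite) \<Rightarrow> real^'q" where "xp v = (\<chi> i. v $ Inl i)"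
definition yp :: "real^('q::finite+'r::finite) \<Rightarrow> real^'r" where "yp v = (\<chi> j. v $ Inr j)"
definition jn :: "real^'q::finite \<Rightarrow> real^'r::finite \<Rightarrow> real^('q+'r)" where
  "jn x y = (\<chi> k. case k of Inl i \<Rightarrow> x$i | Inr j \<Rightarrow> y$j)"

lemma xp_jn[simp]: "xp (jn x y) = x" and yp_jn[simp]: "yp (jn x y) = y"
  by (simp_all add: xp_def yp_def jn_def vec_eq_iff)

lemma jn_xp_yp[simp]: "jn (xp v) (yp v) = v"
  by (simp add: xp_def yp_def jn_def vec_eq_iff split: sum.splits)

lemma sum_plus_univ: "(\<Sum>k\<in>(UNIV::('q::finite+'r::finite) set). f k) = (\<Sum>i\<in>UNIV. f (Inl i)) + (\<Sum>j\<in>UNIV. f (Inr j))"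
proof -
  have "(\<Sum>k\<in>(UNIV::('q+'r) set). f k) = (\<Sum>k\<in>(UNIV <+> UNIV). f k)" by simp
  also have "\<dots> = (\<Sum>i\<in>UNIV. f (Inl i)) + (\<Sum>j\<in>UNIV. f (Inr j))"
    by (subst sum.Plus) (auto simp: comp_def)
  finally show ?thesis .
qed

lemma inner_split: "u \<bullet> v = xp u \<bullet> xp v + yp u \<bullet> yp v"
  by (simp add: inner_vec_def sum_plus_univ xp_def yp_def)

lemma xp_mv: "xp (P *v v) = blk11 P *v xp v + blk12 P *v yp v"
  by (simp add: vec_eq_iff xp_def yp_def blk11_def blk12_def matrix_vector_mult_def sum_plus_univ)

lemma yp_mv: "yp (P *v v) = blk21 P *v xp v + blk22 P *v yp v"
  by (simp add: vec_eq_iff xp_def yp_def blk21_def blk22_def matrix_vector_mult_def sum_plus_univ)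

lemma xp_add[simp]: "xp (u + v) = xp u + xp v" and yp_add[simp]: "yp (u + v) = yp u + yp v"
  and xp_scale[simp]: "xp (c *\<^sub>R u) = c *\<^sub>R xp u" and yp_scale[simp]: "yp (c *\<^sub>R u) = c *\<^sub>R yp u"
  and xp_0[simp]: "xp 0 = 0" and yp_0[simp]: "yp 0 = 0"
  by (simp_all add: xp_def yp_def vec_eq_iff)

lemma jn_0[simp]: "jn 0 0 = 0" by (simp add: jn_def vec_eq_iff split: sum.splits)

lemma jn_eq_0: "jn x y = 0 \<longleftrightarrow> x = 0 \<and> y = 0"
  by (metis jn_0 xp_jn yp_jn)

lemma quad_blocks:
  "v \<bullet> (P *v v) = xp v \<bullet> (blk11 P *v xp v) + xp v \<bullet> (blk12 P *v yp v)
     + yp v \<bullet> (blk21 P *v xp v) + yp v \<bullet> (blk22 P *v yp v)"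
  by (simp add: inner_split[of v] xp_mv yp_mv inner_add_right)

lemma sym_blocks:
  assumes "symmetric_mat P"
  shows "transpose (blk12 P) = blk21 P" "transpose (blk22 P) = blk22 P" "transpose (blk11 P) = blk11 P"
  using assms unfolding symmetric_mat_def
  by (auto simp: blk12_def blk21_def blk22_def blk11_def transpose_def vec_eq_iff)

lemma quad_sym:
  assumes "symmetric_mat P"
  shows "(jn x y) \<bullet> (P *v jn x y) = x \<bullet> (blk11 P *v x) + 2 * (x \<bullet> (blk12 P *v y)) + y \<bullet> (blk22 P *v y)"
proof -
  have "y \<bullet> (blk21 P *v x) = x \<bullet> (blk12 P *v y)"
    using inner_transpose[of y "blk21 P" x] sym_blocks(1)[OF assms]
    by (metis inner_commute transpose_transpose)
  then show ?thesis by (simp add: quad_blocks)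
qed

lemma if_mult_helper: "(if p then (b::real) else 0) * y = (if p then b * y else 0)"
  "(if p then (f::real\<Rightarrow>real) else (*) 0) y = (if p then f y else 0)"
  by auto

lemma stack_mv: "stackI Z *v x = jn x (Z *v x)"
proof -
  have "(stackI Z *v x) $ k = jn x (Z *v x) $ k" for k
    by (cases k) (simp_all add: stackI_def jn_def matrix_vector_mult_def mat_def if_mult_helper sum.delta cong: if_cong)
  then show ?thesis by (simp add: vec_eq_iff)
qed

lemma quad_congr: fixes T :: "real^'n^'m" and P :: "real^'m^'m"
  shows "x \<bullet> ((transpose T ** P ** T) *v x) = (T *v x) \<bullet> (P *v (T *v x))"
proof -
  have "x \<bullet> ((transpose T ** P ** T) *v x) = x \<bullet> (transpose T *v (P *v (T *v x)))"
    by (simp add: matrix_vector_mul_assoc matrix_mul_assoc)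
  also have "\<dots> = (T *v x) \<bullet> (P *v (T *v x))"
    by (metis dot_lmul_matrix inner_commute transpose_matrix_vector)
  finally show ?thesis .
qed

lemma blkdiag_mv: "blkdiagI b *v v = jn (b *\<^sub>R xp v) 0"
proof -
  have "(blkdiagI b *v v) $ k = jn (b *\<^sub>R xp v) 0 $ k" for k
    by (cases k) (simp_all add: blkdiagI_def jn_def xp_def matrix_vector_mult_def sum_plus_univ if_mult_helper sum.delta cong: if_cong)
  then show ?thesis by (simp add: vec_eq_iff)
qed

lemma blkdiag_quad: "v \<bullet> (blkdiagI b *v v) = b * (xp v \<bullet> xp v)"
  by (simp add: blkdiag_mv inner_split[of v])

lemma loewner_iff:
  "loewner_le (blkdiagI b) (M - a *\<^sub>R N) \<longleftrightarrow>
     (\<forall>v. v \<bullet> (M *v v) - a * (v \<bullet> (N *v v)) - b * (xp v \<bullet> xp v) \<ge> 0)"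
  by (simp add: loewner_le_def psd_def matrix_vector_mult_diff_rdistrib inner_diff_right
      blkdiag_quad scaleR_matrix_vector_assoc[symmetric])



lemma key1d:
  fixes a0 am a2 h0 hm h2 :: real
  assumes a0: "a0 > 0" and a2: "a2 < 0"
    and H: "\<And>t. a0 + 2*am*t + a2*t^2 \<ge> 0 \<Longrightarrow> h0 + 2*hm*t + h2*t^2 \<ge> 0"
  shows "h2/a2 \<le> h0/a0"
proof (rule ccontr)
  assume "\<not> ?thesis"
  then have lt: "h0/a0 < h2/a2" by simp
  define l where "l = (h0/a0 + h2/a2)/2"
  have avg: "\<And>p q::real. p < q \<Longrightarrow> p < (p+q)/2 \<and> (p+q)/2 < q" by auto
  have "h0/a0 < l" using avg[OF lt] unfolding l_def by blast
  have "l < h2/a2" using avg[OF lt] unfolding l_def by blast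
  note lh = this \<open>h0/a0 < l\<close>
  have k0: "h0 - l*a0 < 0" and k2: "h2 - l*a2 < 0"
    using a0 a2 lh by (auto simp: field_simps)
  define D where "D = am^2 - a0*a2"
  have D: "D > am^2" unfolding D_def using a0 a2 by (simp add: mult_pos_neg)
  define s where "s = sqrt D"
  have s2: "s^2 = D" unfolding s_def using D by (simp add: power2_eq_square) (smt (verit) real_sqrt_pow2 power2_eq_square zero_le_power2)
  have sabs: "s > \<bar>am\<bar>" unfolding s_def using D
    by (metis real_sqrt_abs real_sqrt_less_mono)
  define t1 where "t1 = (s - am)/a2"
  define t2 where "t2 = -(am + s)/a2"
  have t1: "t1 < 0" unfolding t1_def using sabs a2 by (simp add: divide_pos_neg)
  have t2: "t2 > 0" unfolding t2_def using sabs a2 by (simp add: divide_neg_neg)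
  have r1: "a0 + 2*am*t1 + a2*t1^2 = 0"
    unfolding t1_def using a2 s2 unfolding D_def by (simp add: field_simps power2_eq_square) algebra
  have r2: "a0 + 2*am*t2 + a2*t2^2 = 0"
    unfolding t2_def using a2 s2 unfolding D_def by (simp add: field_simps power2_eq_square) algebra
  define k where "k t = (h0 - l*a0) + 2*(hm - l*am)*t + (h2 - l*a2)*t^2" for t
  have kt: "k t = (h0 + 2*hm*t + h2*t^2) - l*(a0 + 2*am*t + a2*t^2)" for t
    unfolding k_def by (simp add: algebra_simps)
  have kt1: "k t1 \<ge> 0" using H[of t1] r1 kt[of t1] by simp
  have kt2: "k t2 \<ge> 0" using H[of t2] r2 kt[of t2] by simp
  have id: "(t2 - t1) * (h0 - l*a0) = t2 * k t1 - t1 * k t2 + (h2 - l*a2) * t1 * t2 * (t2 - t1)"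
    unfolding k_def by (simp add: algebra_simps power2_eq_square)
  have "t2 * k t1 \<ge> 0" using t2 kt1 by simp
  moreover have "- t1 * k t2 \<ge> 0" using t1 kt2 by (simp add: mult_nonpos_nonneg)
  moreover have "(h2 - l*a2) * t1 * t2 * (t2 - t1) > 0"
    using k2 t1 t2 by (simp add: mult_neg_neg mult_pos_pos)
  ultimately have "(t2 - t1) * (h0 - l*a0) > 0" using id by linarith
  moreover have "(t2 - t1) * (h0 - l*a0) < 0" using t1 t2 k0 by (simp add: mult_pos_neg)
  ultimately show False by linarith
qed

lemma quad_expand:
  fixes A :: "real^'n^'n"
  assumes "transpose A = A"
  shows "(u + t *\<^sub>R w) \<bullet> (A *v (u + t *\<^sub>R w)) = u \<bullet> (A *v u) + 2*t*(u \<bullet> (A *v w)) + t^2 * (w \<bullet> (A *v w))"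
  using sym_bil[OF assms, of w u]
  by (simp add: matrix_vector_right_distrib matrix_vector_mult_scaleR inner_add_left inner_add_right
      algebra_simps power2_eq_square)

lemma S_lemma:
  fixes A H :: "real^'n^'n"
  assumes sA: "transpose A = A" and sH: "transpose H = H"
    and slater: "\<exists>u. u \<bullet> (A *v u) > 0"
    and hyp: "\<And>v. v \<bullet> (A *v v) \<ge> 0 \<Longrightarrow> v \<bullet> (H *v v) \<ge> 0"
  shows "\<exists>a\<ge>0. \<forall>v. v \<bullet> (H *v v) \<ge> a * (v \<bullet> (A *v v))"
proof -
  let ?f = "\<lambda>v. v \<bullet> (A *v v)" and ?h = "\<lambda>v. v \<bullet> (H *v v)"
  define R where "R = {?h u / ?f u | u. ?f u > 0}"
  define a where "a = Inf R"
  have Rne: "R \<noteq> {}" using slater unfolding R_def by auto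
  have Rpos: "r \<ge> 0" if "r \<in> R" for r using that hyp unfolding R_def
    by (auto intro!: divide_nonneg_pos)
  have bdd: "bdd_below R" unfolding bdd_below_def using Rpos by blast
  have a0: "a \<ge> 0" unfolding a_def using Rne Rpos by (intro cInf_greatest) auto
  have key: "?h w / ?f w \<le> ?h u / ?f u" if fu: "?f u > 0" and fw: "?f w < 0" for u w
  proof (rule key1d[where am = "u \<bullet> (A *v w)" and hm = "u \<bullet> (H *v w)"])
    show "?f u > 0" "?f w < 0" by fact+
    fix t :: real
    assume "?f u + 2 * (u \<bullet> (A *v w)) * t + ?f w * t^2 \<ge> 0"
    then have "?f (u + t *\<^sub>R w) \<ge> 0" using quad_expand[OF sA, of u t w] by (simp add: algebra_simps)
    then have "?h (u + t *\<^sub>R w) \<ge> 0" by (rule hyp)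
    then show "?h u + 2 * (u \<bullet> (H *v w)) * t + ?h w * t^2 \<ge> 0"
      using quad_expand[OF sH, of u t w] by (simp add: algebra_simps)
  qed
  have "?h v \<ge> a * ?f v" for v
  proof (cases "?f v" "0::real" rule: linorder_cases)
    case less
    have "?h v / ?f v \<le> a" unfolding a_def
      using Rne key[OF _ less] by (intro cInf_greatest) (auto simp: R_def)
    then show ?thesis using less by (simp add: pos_divide_le_eq neg_divide_le_eq)
  next
    case equal then show ?thesis using hyp[of v] by simp
  next
    case greater
    have "a \<le> ?h v / ?f v" unfolding a_def using bdd greater by (intro cInf_lower) (auto simp: R_def)
    then show ?thesis using greater by (simp add: le_divide_eq)
  qed
  then show ?thesis using a0 by blast
qed



lemma outer_mv: "((\<chi> i j. (d::real^'r)$i * (w::real^'q)$j) *v z) = (w \<bullet> z) *\<^sub>R d"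
  by (simp add: vec_eq_iff matrix_vector_mult_def inner_vec_def sum_distrib_left mult_ac)

lemma quad_nonsym: fixes S :: "real^'n^'n" shows
  "(z + t *\<^sub>R x) \<bullet> (S *v (z + t *\<^sub>R x)) = z \<bullet> (S *v z) + t * (z \<bullet> (S *v x)) + t * (x \<bullet> (S *v z)) + t^2 * (x \<bullet> (S *v x))"
  by (simp add: matrix_vector_right_distrib matrix_vector_mult_scaleR inner_add_left inner_add_right
      algebra_simps power2_eq_square)

lemma cs_psd:
  fixes S :: "real^'n^'n"
  assumes psd: "\<And>v. v \<bullet> (S *v v) \<ge> 0" and s: "x \<bullet> (S *v x) > 0"
  shows "((z \<bullet> (S *v x) + x \<bullet> (S *v z))/2)^2 \<le> (x \<bullet> (S *v x)) * (z \<bullet> (S *v z))"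
proof -
  define b where "b = (z \<bullet> (S *v x) + x \<bullet> (S *v z))/2"
  define sx where "sx = x \<bullet> (S *v x)"
  define t where "t = - b / sx"
  have "0 \<le> (z + t *\<^sub>R x) \<bullet> (S *v (z + t *\<^sub>R x))" by (rule psd)
  also have "\<dots> = z \<bullet> (S *v z) + 2 * t * b + t^2 * sx"
    unfolding quad_nonsym b_def sx_def by (simp add: algebra_simps)
  also have "\<dots> = z \<bullet> (S *v z) - b^2 / sx"
    unfolding t_def using s unfolding sx_def[symmetric] by (simp add: field_simps power2_eq_square)
  finally have "b^2 / sx \<le> z \<bullet> (S *v z)" by simp
  then show ?thesis using s unfolding b_def[symmetric] sx_def[symmetric] by (simp add: divide_le_eq mult.commute)
qed

lemma nsd_zero:
  fixes A :: "real^'n^'n"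
  assumes sA: "transpose A = A" and nsd: "\<And>v. v \<bullet> (A *v v) \<le> 0" and y: "y \<bullet> (A *v y) = 0"
  shows "A *v y = 0"
proof -
  have lin: "2 * t * (z \<bullet> (A *v y)) + t^2 * (z \<bullet> (A *v z)) \<le> 0" for t z
    using nsd[of "y + t *\<^sub>R z"] quad_expand[OF sA, of y t z] y sym_bil[OF sA, of z y] by simp
  have "(A *v y) \<bullet> (A *v y) = 0"
  proof (rule ccontr)
    define z where "z = A *v y"
    assume "(A *v y) \<bullet> (A *v y) \<noteq> 0"
    then have b: "z \<bullet> (A *v y) > 0" unfolding z_def by (simp add: order_le_neq_trans)
    define c where "c = z \<bullet> (A *v z)"
    have c: "c \<le> 0" unfolding c_def by (rule nsd)
    define t where "t = (z \<bullet> (A *v y)) / (1 - c)"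
    have t: "t > 0" using c b unfolding t_def by simp
    have le: "2 * t * (z \<bullet> (A *v y)) + t^2 * c \<le> 0" using lin[of t z] unfolding c_def .
    have tc: "t * c \<ge> - (z \<bullet> (A *v y))" using c b unfolding t_def by (simp add: field_simps)
    have "2 * t * (z \<bullet> (A *v y)) + t^2 * c = t * (2 * (z \<bullet> (A *v y)) + t * c)"
      by (simp add: algebra_simps power2_eq_square)
    moreover have "2 * (z \<bullet> (A *v y)) + t * c > 0" using tc b by linarith
    ultimately have "2 * t * (z \<bullet> (A *v y)) + t^2 * c > 0" using t by simp
    with le show False by simp
  qed
  then show ?thesis by simp
qed



lemma neg_mv: "(- A) *v (x::real^'n) = - (A *v x)"
  by (simp add: matrix_vector_mult_def vec_eq_iff sum_negf)

lemma hard_claimA: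
  fixes M N :: "real^('q::finite+'r::finite)^('q+'r)"
  assumes sM: "symmetric_mat M" and sN: "symmetric_mat N" and NP: "N \<in> PiSet"
    and inc: "Zr N \<subseteq> Zr_plus M"
  defines "A \<equiv> blk22 N" and "P \<equiv> pinv (blk22 N)"
  shows "A *v (P *v (blk21 N *v x)) = blk21 N *v x"
    and "(jn x y) \<bullet> (N *v jn x y) = x \<bullet> (schur N *v x) + (y + P *v (blk21 N *v x)) \<bullet> (A *v (y + P *v (blk21 N *v x)))"
    and "x \<noteq> 0 \<Longrightarrow> (jn x y) \<bullet> (N *v jn x y) \<ge> 0 \<Longrightarrow> (jn x y) \<bullet> (M *v jn x y) > 0"
proof -
  have sA: "transpose A = A" unfolding A_def using sym_blocks[OF sN] by simp
  have PA: "P = pinv A" unfolding P_def A_def ..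
  note pA = pinv_sym[OF sA, folded PA]
  have Ansd: "d \<bullet> (A *v d) \<le> 0" for d
    using NP unfolding PiSet_def loewner_le_def psd_def A_def
    by (auto simp: neg_mv)
  have Spsd: "z \<bullet> (schur N *v z) \<ge> 0" for z
    using NP unfolding PiSet_def psd_def by auto
  have ker: "A *v k = 0 \<Longrightarrow> blk12 N *v k = 0" for k
    using NP unfolding PiSet_def ker_mat_def A_def by auto
  let ?N12 = "blk12 N" and ?N21 = "blk21 N"
  have t12: "transpose ?N12 = ?N21" using sym_blocks[OF sN] by simp
  have "?N12 = ?N12 ** P ** A"
  proof -
    have "?N12 *v k = (?N12 ** P ** A) *v k" for k
    proof -
      have "A *v (k - P *v (A *v k)) = 0"
        using pA(1) by (simp add: matrix_vector_mult_diff_distrib matrix_vector_mul_assoc matrix_mul_assoc)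
      then have "?N12 *v (k - P *v (A *v k)) = 0" by (rule ker)
      then show ?thesis by (simp add: matrix_vector_mult_diff_distrib matrix_vector_mul_assoc matrix_mul_assoc)
    qed
    then show ?thesis by (simp add: matrix_eq)
  qed
  then have "transpose ?N12 = transpose (?N12 ** P ** A)" by simp
  then have APN: "?N21 = A ** P ** ?N21"
    using t12 sA pA(3) by (simp add: matrix_transpose_mul matrix_mul_assoc)
  show AP: "A *v (P *v (?N21 *v x)) = ?N21 *v x" for x
    using APN by (metis matrix_vector_mul_assoc)
  have decomp: "(jn x y) \<bullet> (N *v jn x y) = x \<bullet> (schur N *v x) + (y + P *v (?N21 *v x)) \<bullet> (A *v (y + P *v (?N21 *v x)))" for x y
  proof -
    define p where "p = P *v (?N21 *v x)"
    have Ap: "A *v p = ?N21 *v x" unfolding p_def by (rule AP)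
    have e1: "(y + p) \<bullet> (A *v (y + p)) = y \<bullet> (A *v y) + 2 * (y \<bullet> (A *v p)) + p \<bullet> (A *v p)"
      using quad_expand[OF sA, of y 1 p] by simp
    have e2: "y \<bullet> (?N21 *v x) = x \<bullet> (?N12 *v y)"
      by (metis inner_commute inner_transpose t12)
    have e3: "p \<bullet> (?N21 *v x) = x \<bullet> ((?N12 ** P ** ?N21) *v x)"
      unfolding p_def by (metis inner_commute inner_transpose t12 matrix_vector_mul_assoc)
    show ?thesis
      unfolding quad_sym[OF sN] schur_def p_def[symmetric] e1 Ap e2 e3
      by (simp add: matrix_vector_mult_diff_rdistrib inner_diff_right A_def P_def)
  qed
  show "(jn x y) \<bullet> (N *v jn x y) = x \<bullet> (schur N *v x) + (y + P *v (?N21 *v x)) \<bullet> (A *v (y + P *v (?N21 *v x)))"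
    by (rule decomp)
  assume x0: "x \<noteq> 0" and f0: "(jn x y) \<bullet> (N *v jn x y) \<ge> 0"
  define d where "d = y + P *v (?N21 *v x)"
  define c where "c = d \<bullet> (A *v d)"
  define s where "s = x \<bullet> (schur N *v x)"
  have c: "c \<le> 0" unfolding c_def by (rule Ansd)
  have s: "s \<ge> 0" unfolding s_def by (rule Spsd)
  have sc: "s + c \<ge> 0" using f0 decomp[of x y] unfolding s_def c_def d_def by simp
  obtain w where wx: "w \<bullet> x = 1" and wpsd: "\<And>z. z \<bullet> (schur N *v z) + c * (w \<bullet> z)^2 \<ge> 0"
  proof (cases "s = 0")
    case True
    then have "c = 0" using c sc by simp
    moreover have "((1 / (x \<bullet> x)) *\<^sub>R x) \<bullet> x = 1" using x0 by simp
    ultimately show ?thesis using that[of "(1 / (x \<bullet> x)) *\<^sub>R x"] Spsd by simp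
  next
    case False
    then have s0: "s > 0" using s by simp
    define w where "w = (1 / (2 * s)) *\<^sub>R (schur N *v x + transpose (schur N) *v x)"
    have wz: "w \<bullet> z = ((z \<bullet> (schur N *v x) + x \<bullet> (schur N *v z))/2) / s" for z
    proof -
      have "w \<bullet> z = (1 / (2 * s)) * ((schur N *v x) \<bullet> z + (transpose (schur N) *v x) \<bullet> z)"
        unfolding w_def by (simp add: inner_add_left)
      also have "(transpose (schur N) *v x) \<bullet> z = x \<bullet> (schur N *v z)"
        using inner_transpose[of x "schur N" z] by simp
      also have "(schur N *v x) \<bullet> z = z \<bullet> (schur N *v x)" by (rule inner_commute)
      finally show ?thesis by simp
    qed
    have "w \<bullet> x = 1" using wz[of x] s0 unfolding s_def by simp
    moreover have "z \<bullet> (schur N *v z) + c * (w \<bullet> z)^2 \<ge> 0" for z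
    proof -
      define b where "b = (z \<bullet> (schur N *v x) + x \<bullet> (schur N *v z))/2"
      have cs: "b^2 \<le> s * (z \<bullet> (schur N *v z))" unfolding b_def s_def
        using cs_psd[of "schur N" x z] Spsd s0 unfolding s_def by simp
      have "c * (w \<bullet> z)^2 \<ge> - s * (w \<bullet> z)^2" using sc by (intro mult_right_mono) auto
      moreover have "s * (w \<bullet> z)^2 = b^2 / s" unfolding wz b_def[symmetric] using s0
        by (simp add: power2_eq_square)
      moreover have "b^2 / s \<le> z \<bullet> (schur N *v z)" using cs s0 by (simp add: divide_le_eq mult.commute)
      ultimately show ?thesis by linarith
    qed
    ultimately show ?thesis using that by blast
  qed
  define Z :: "real^'q^'r" where "Z = (\<chi> i j. d$i * w$j) - P ** ?N21"
  have Zz: "Z *v z = (w \<bullet> z) *\<^sub>R d - P *v (?N21 *v z)" for z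
    unfolding Z_def by (simp add: matrix_vector_mult_diff_rdistrib outer_mv matrix_vector_mul_assoc)
  have Zx: "Z *v x = y" using Zz[of x] wx unfolding d_def by simp
  have "Z \<in> Zr N"
    unfolding Zr_def psd_def
  proof (intro CollectI allI)
    fix z
    have "z \<bullet> ((transpose (stackI Z) ** N ** stackI Z) *v z) = (jn z (Z *v z)) \<bullet> (N *v jn z (Z *v z))"
      by (simp add: quad_congr stack_mv)
    also have "\<dots> = z \<bullet> (schur N *v z) + (w \<bullet> z)^2 * c"
      unfolding decomp Zz c_def by (simp add: matrix_vector_mult_scaleR power2_eq_square)
    finally show "0 \<le> z \<bullet> ((transpose (stackI Z) ** N ** stackI Z) *v z)"
      using wpsd[of z] by (simp add: mult.commute)
  qed
  then have "Z \<in> Zr_plus M" using inc by blast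
  then have "0 < x \<bullet> ((transpose (stackI Z) ** M ** stackI Z) *v x)"
    unfolding Zr_plus_def pd_def using x0 by blast
  then show "(jn x y) \<bullet> (M *v jn x y) > 0"
    by (simp add: quad_congr stack_mv Zx)
qed



lemma quad1d_pos:
  fixes a b c :: real
  assumes pos: "\<And>t. a + 2*b*t + c*t^2 > 0" and c: "c \<le> 0"
  shows "c = 0 \<and> b = 0"
proof -
  have c0: "c = 0"
  proof (rule ccontr)
    assume "c \<noteq> 0" then have cn: "c < 0" using c by simp
    define T where "T = (\<bar>a\<bar> + 2*\<bar>b\<bar> + 1) / (-c) + 1"
    have "(\<bar>a\<bar> + 2*\<bar>b\<bar> + 1) / (-c) \<ge> 0" using cn by (intro divide_nonneg_pos) auto
    then have T1: "T \<ge> 1" unfolding T_def by simp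
    have cT: "c * T \<le> -(\<bar>a\<bar> + 2*\<bar>b\<bar> + 1)" unfolding T_def using cn
      by (simp add: field_simps)
    have "c*T^2 = (c*T)*T" by (simp add: power2_eq_square)
    also have "\<dots> \<le> -(\<bar>a\<bar> + 2*\<bar>b\<bar> + 1) * T" using cT T1 by (intro mult_right_mono) auto
    finally have "a + 2*b*T + c*T^2 \<le> a + 2*b*T - (\<bar>a\<bar> + 2*\<bar>b\<bar> + 1) * T" by (simp add: algebra_simps)
    also have "\<dots> \<le> 0"
    proof -
      have "2*b*T \<le> 2*\<bar>b\<bar>*T" using T1 by (intro mult_right_mono) auto
      moreover have "a \<le> \<bar>a\<bar>*T" using T1 by (smt (verit) mult_le_cancel_left1 abs_ge_self abs_ge_zero)
      moreover have "(\<bar>a\<bar> + 2*\<bar>b\<bar> + 1) * T = \<bar>a\<bar>*T + 2*\<bar>b\<bar>*T + T" by (simp add: algebra_simps)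
      ultimately show ?thesis using T1 by linarith
    qed
    finally show False using pos[of T] by simp
  qed
  have "b = 0"
  proof (rule ccontr)
    assume b: "b \<noteq> 0"
    have "a + 2*b*(-(\<bar>a\<bar>+1)/(2*b)) + c*(-(\<bar>a\<bar>+1)/(2*b))^2 = a - (\<bar>a\<bar>+1)"
      using b c0 by (simp add: field_simps)
    then show False using pos[of "-(\<bar>a\<bar>+1)/(2*b)"] by simp
  qed
  with c0 show ?thesis by simp
qed

lemma quad_inv:
  fixes P :: "real^('q::finite+'r::finite)^('q+'r)"
  assumes sP: "symmetric_mat P" and k12: "blk12 P *v k = 0" and k22: "blk22 P *v k = 0"
  shows "(jn x (y + k)) \<bullet> (P *v jn x (y + k)) = (jn x y) \<bullet> (P *v jn x y)"
proof -
  have s22: "transpose (blk22 P) = blk22 P" using sym_blocks[OF sP] by simp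
  have "k \<bullet> (blk22 P *v y) = y \<bullet> (blk22 P *v k)" by (rule sym_bil[OF s22])
  then show ?thesis unfolding quad_sym[OF sP]
    using k12 k22 by (simp add: matrix_vector_right_distrib inner_add_left inner_add_right)
qed

lemma quad_scale: "(c *\<^sub>R u) \<bullet> (P *v (c *\<^sub>R u)) = c^2 * (u \<bullet> (P *v (u::real^'n)))"
  for P :: "real^'n^'n"
  by (simp add: matrix_vector_mult_scaleR power2_eq_square)

lemma bl_xp: "bounded_linear (xp :: real^('q::finite+'r::finite) \<Rightarrow> real^'q)"
  by (rule linear_conv_bounded_linear[THEN iffD1]) (rule linearI, simp_all)
lemma bl_yp: "bounded_linear (yp :: real^('q::finite+'r::finite) \<Rightarrow> real^'r)"
  by (rule linear_conv_bounded_linear[THEN iffD1]) (rule linearI, simp_all)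

lemma transpose_diff: "transpose (A - B) = transpose A - transpose (B::real^'n^'m)"
  by (simp add: vec_eq_iff transpose_def)

lemma blkdiag_sym: "transpose (blkdiagI b :: real^('q::finite+'r::finite)^('q+'r)) = blkdiagI b"
  by (auto simp: vec_eq_iff transpose_def blkdiagI_def split: sum.splits)



lemma hard:
  fixes M N :: "real^('q::finite+'r::finite)^('q+'r)"
  assumes sM: "symmetric_mat M" and sN: "symmetric_mat N" and NP: "N \<in> PiSet"
    and M22: "loewner_le (blk22 M) 0" and inc: "Zr N \<subseteq> Zr_plus M"
  shows "\<exists>a b. a \<ge> 0 \<and> b > 0 \<and> loewner_le (blkdiagI b) (M - a *\<^sub>R N)"
proof -
  define A where "A = blk22 N"
  define P where "P = pinv (blk22 N)"
  let ?N21 = "blk21 N"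
  define f where "f v = v \<bullet> (N *v v)" for v
  define g where "g v = v \<bullet> (M *v v)" for v
  define e where "e v = xp v \<bullet> xp v" for v :: "real^('q+'r)"
  note cl = hard_claimA[OF sM sN NP inc, folded A_def P_def]
  have sA: "transpose A = A" unfolding A_def using sym_blocks[OF sN] by simp
  have PA: "P = pinv A" unfolding P_def A_def ..
  note pA = pinv_sym[OF sA, folded PA]
  have Ansd: "d \<bullet> (A *v d) \<le> 0" for d
    using NP unfolding PiSet_def loewner_le_def psd_def A_def by (auto simp: neg_mv)
  have Spsd: "z \<bullet> (schur N *v z) \<ge> 0" for z
    using NP unfolding PiSet_def psd_def by auto
  have ker: "A *v k = 0 \<Longrightarrow> blk12 N *v k = 0" for k
    using NP unfolding PiSet_def ker_mat_def A_def by auto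
  have sM22: "transpose (blk22 M) = blk22 M" using sym_blocks[OF sM] by simp
  have M22nsd: "d \<bullet> (blk22 M *v d) \<le> 0" for d
    using M22 unfolding loewner_le_def psd_def by (auto simp: neg_mv)
  \<comment> \<open>kernel\<close>
  have kerM: "blk22 M *v k = 0 \<and> blk12 M *v k = 0" if Ak: "A *v k = 0" for k
  proof -
    have step: "k \<bullet> (blk22 M *v k) = 0 \<and> x \<bullet> (blk12 M *v k) + (- (P *v (?N21 *v x))) \<bullet> (blk22 M *v k) = 0"
      if x0: "x \<noteq> 0" for x
    proof -
      define y0 where "y0 = - (P *v (?N21 *v x))"
      have pos: "(jn x (y0 + t *\<^sub>R k)) \<bullet> (M *v jn x (y0 + t *\<^sub>R k)) > 0" for t
      proof (rule cl(3)[OF x0])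
        have eq: "y0 + t *\<^sub>R k + P *v (?N21 *v x) = t *\<^sub>R k" unfolding y0_def by simp
        show "(jn x (y0 + t *\<^sub>R k)) \<bullet> (N *v jn x (y0 + t *\<^sub>R k)) \<ge> 0"
          unfolding cl(2) eq using Spsd[of x] Ak by (simp add: matrix_vector_mult_scaleR)
      qed
      have ex: "(jn x (y0 + t *\<^sub>R k)) \<bullet> (M *v jn x (y0 + t *\<^sub>R k)) =
         (x \<bullet> (blk11 M *v x) + 2 * (x \<bullet> (blk12 M *v y0)) + y0 \<bullet> (blk22 M *v y0))
         + 2 * (x \<bullet> (blk12 M *v k) + y0 \<bullet> (blk22 M *v k)) * t + (k \<bullet> (blk22 M *v k)) * t^2" for t
        unfolding quad_sym[OF sM] quad_expand[OF sM22]
        by (simp add: matrix_vector_right_distrib matrix_vector_mult_scaleR algebra_simps)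
      have "k \<bullet> (blk22 M *v k) = 0 \<and> x \<bullet> (blk12 M *v k) + y0 \<bullet> (blk22 M *v k) = 0"
        by (rule quad1d_pos) (use pos ex M22nsd in auto)
      then show ?thesis unfolding y0_def .
    qed
    have x1: "(\<chi> i. (1::real)) \<noteq> (0 :: real^'q)" by (simp add: vec_eq_iff)
    have m22: "blk22 M *v k = 0"
      using nsd_zero[OF sM22 M22nsd] step[OF x1] by blast
    have "x \<bullet> (blk12 M *v k) = 0" for x
      using step[of x] m22 by (cases "x = 0") auto
    then have "(blk12 M *v k) \<bullet> (blk12 M *v k) = 0" by blast
    with m22 show ?thesis by simp
  qed
  define pr where "pr y = P *v (A *v y)" for y
  have pr_ker: "A *v (pr y - y) = 0" for y
    unfolding pr_def using pA(1) by (simp add: matrix_vector_mult_diff_distrib matrix_vector_mul_assoc matrix_mul_assoc)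
  have pr_idem: "pr (pr y) = pr y" for y
    unfolding pr_def using pA(2) by (simp add: matrix_vector_mul_assoc matrix_mul_assoc)
  have pr_lin: "pr (c *\<^sub>R y) = c *\<^sub>R pr y" for c y unfolding pr_def by (simp add: matrix_vector_mult_scaleR)
  have invN: "f (jn x (pr y)) = f (jn x y)" for x y
  proof -
    have "f (jn x (y + (pr y - y))) = f (jn x y)" unfolding f_def
      by (rule quad_inv[OF sN]) (use ker[OF pr_ker] pr_ker in \<open>auto simp: A_def\<close>)
    then show ?thesis by simp
  qed
  have invM: "g (jn x (pr y)) = g (jn x y)" for x y
  proof -
    have "g (jn x (y + (pr y - y))) = g (jn x y)" unfolding g_def
      by (rule quad_inv[OF sM]) (use kerM[OF pr_ker] in auto)
    then show ?thesis by simp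
  qed
  define C where "C = sphere (0::real^('q+'r)) 1 \<inter> {v. pr (yp v) = yp v}"
  have contf: "continuous_on S f" for S unfolding f_def
    by (rule continuous_on_inner[OF continuous_on_id matrix_vector_mult_linear_continuous_on])
  have contg: "continuous_on S g" for S unfolding g_def
    by (rule continuous_on_inner[OF continuous_on_id matrix_vector_mult_linear_continuous_on])
  have conte: "continuous_on S e" for S unfolding e_def
    by (rule continuous_on_inner[OF linear_continuous_on[OF bl_xp] linear_continuous_on[OF bl_xp]])
  have contpr: "continuous_on S (\<lambda>v. pr (yp v))" for S
  proof -
    have eq: "(\<lambda>v. pr (yp v)) = (\<lambda>v. (P ** A) *v yp v)" unfolding pr_def by (simp add: matrix_vector_mul_assoc)
    have "bounded_linear (\<lambda>v. (P ** A) *v yp v)"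
      by (rule bounded_linear_compose[OF matrix_vector_mul_bounded_linear bl_yp])
    then show ?thesis unfolding eq by (rule linear_continuous_on)
  qed
  have compC: "compact C"
  proof -
    have "closed {v. pr (yp v) = yp v}" by (rule closed_Collect_eq[OF contpr linear_continuous_on[OF bl_yp]])
    then show ?thesis unfolding C_def by (intro compact_Int_closed compact_sphere)
  qed
  have e_le: "e v \<le> 1" if "v \<in> C" for v
  proof -
    have "v \<bullet> v = 1" using that unfolding C_def by (simp add: dot_square_norm)
    moreover have "yp v \<bullet> yp v \<ge> 0" by simp
    ultimately show ?thesis unfolding e_def using inner_split[of v v] by linarith
  qed
  have xnz: "xp v \<noteq> 0" if "v \<in> C" "f v \<ge> 0" for v
  proof
    assume x0: "xp v = 0"
    define y where "y = yp v"
    have v: "v = jn 0 y" using x0 unfolding y_def by (metis jn_xp_yp)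
    have "y \<bullet> (A *v y) \<ge> 0" using that(2) unfolding f_def v quad_sym[OF sN] A_def by simp
    then have "y \<bullet> (A *v y) = 0" using Ansd[of y] by simp
    then have "A *v y = 0" using nsd_zero[OF sA Ansd] by blast
    moreover have "pr y = y" using that(1) unfolding C_def y_def by simp
    ultimately have "y = 0" unfolding pr_def by simp
    then have "v = 0" using v by simp
    then show False using that(1) unfolding C_def by simp
  qed
  \<comment> \<open>extension from C to everything\<close>
  have ext: "R (f v) (g v) (e v)"
    if hom: "\<And>c a b d. c > 0 \<Longrightarrow> R (c*a) (c*b) (c*d) = R a b d" and R0: "R 0 0 0"
      and RC: "\<And>u. u \<in> C \<Longrightarrow> R (f u) (g u) (e u)" for R v
  proof -
    define v' where "v' = jn (xp v) (pr (yp v))"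
    have fv: "f v' = f v" "g v' = g v" "e v' = e v"
      unfolding v'_def using invN[of "xp v" "yp v"] invM[of "xp v" "yp v"] by (simp_all add: e_def)
    show ?thesis
    proof (cases "v' = 0")
      case True
      then show ?thesis using fv R0 unfolding f_def g_def e_def by simp
    next
      case False
      define c where "c = norm v'"
      have c: "c > 0" using False unfolding c_def by simp
      define u where "u = (1/c) *\<^sub>R v'"
      have vu: "v' = c *\<^sub>R u" unfolding u_def using c by simp
      have "u \<in> C" unfolding C_def u_def
        using c pr_idem[of "yp v"] pr_lin[of "1/c" "pr (yp v)"]
        by (simp add: c_def v'_def)
      then have "R (f u) (g u) (e u)" by (rule RC)
      moreover have "f v' = c^2 * f u" "g v' = c^2 * g u" "e v' = c^2 * e u"
        unfolding vu f_def g_def e_def by (simp_all add: matrix_vector_mult_scaleR power2_eq_square)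
      ultimately show ?thesis using hom[of "c^2" "f u" "g u" "e u"] c fv by simp
    qed
  qed
  \<comment> \<open>margin\<close>
  obtain b0 where b0: "b0 > 0" and marg: "\<And>v. f v \<ge> 0 \<Longrightarrow> g v \<ge> b0 * e v"
  proof -
    define T where "T = C \<inter> {v. f v \<ge> 0}"
    have compT: "compact T" unfolding T_def
      by (intro compact_Int_closed compC closed_Collect_le continuous_intros contf)
    have gpos: "g v > 0" if "v \<in> T" for v
    proof -
      have "xp v \<noteq> 0" using xnz that unfolding T_def by auto
      moreover have "f (jn (xp v) (yp v)) \<ge> 0" using that unfolding T_def by simp
      ultimately have "g (jn (xp v) (yp v)) > 0" using cl(3) unfolding f_def g_def by blast
      then show ?thesis by simp
    qed
    obtain b0 where b0: "b0 > 0" and bT: "\<And>v. v \<in> T \<Longrightarrow> g v \<ge> b0"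
    proof (cases "T = {}")
      case True then show ?thesis using that[of 1] by auto
    next
      case False
      obtain v0 where v0: "v0 \<in> T" "\<And>v. v \<in> T \<Longrightarrow> g v0 \<le> g v"
        using continuous_attains_inf[OF compT False contg] by blast
      show ?thesis using that[of "g v0"] gpos v0 by auto
    qed
    have "f v \<ge> 0 \<longrightarrow> g v \<ge> b0 * e v" for v
    proof (rule ext[of "\<lambda>a b d. a \<ge> 0 \<longrightarrow> b \<ge> b0 * d"])
      fix u assume u: "u \<in> C"
      show "f u \<ge> 0 \<longrightarrow> g u \<ge> b0 * e u"
      proof
        assume "f u \<ge> 0"
        then have "u \<in> T" using u unfolding T_def by simp
        then have "g u \<ge> b0" by (rule bT)
        moreover have "b0 * e u \<le> b0" using e_le[OF u] b0 by (simp add: mult_left_le)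
        ultimately show "g u \<ge> b0 * e u" by linarith
      qed
    next
      fix c a b d :: real assume "c > 0"
      then show "(c*a \<ge> 0 \<longrightarrow> c*b \<ge> b0 * (c*d)) = (a \<ge> 0 \<longrightarrow> b \<ge> b0 * d)"
        by (simp add: zero_le_mult_iff mult.left_commute)
    qed simp
    then show ?thesis using that b0 by blast
  qed
  define b where "b = b0 / 2"
  have b: "b > 0" using b0 unfolding b_def by simp
  define H where "H = M - blkdiagI b"
  define h where "h v = g v - b * e v" for v
  have hH: "v \<bullet> (H *v v) = h v" for v
    unfolding H_def h_def g_def e_def by (simp add: matrix_vector_mult_diff_rdistrib inner_diff_right blkdiag_quad)
  have e0: "e v \<ge> 0" for v unfolding e_def by simp
  have hmarg: "f v \<ge> 0 \<Longrightarrow> h v \<ge> b * e v" for v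
    using marg[of v] e0[of v] unfolding h_def b_def by simp
  obtain a where a: "a \<ge> 0" and ha: "\<And>v. h v \<ge> a * f v"
  proof (cases "\<exists>u. f u > 0")
    case True
    have sH: "transpose H = H" unfolding H_def
      using sM blkdiag_sym by (simp add: transpose_diff symmetric_mat_def)
    have sNt: "transpose N = N" using sN by (simp add: symmetric_mat_def)
    have "\<exists>a\<ge>0. \<forall>v. v \<bullet> (H *v v) \<ge> a * (v \<bullet> (N *v v))"
    proof (rule S_lemma[OF sNt sH])
      show "\<exists>u. 0 < u \<bullet> (N *v u)" using True unfolding f_def .
      fix v assume "0 \<le> v \<bullet> (N *v v)"
      then have "h v \<ge> b * e v" using hmarg unfolding f_def by blast
      moreover have "b * e v \<ge> 0" using b e0[of v] by simp
      ultimately show "0 \<le> v \<bullet> (H *v v)" unfolding hH by linarith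
    qed
    then show ?thesis using that unfolding hH f_def by blast
  next
    case False
    then have fle: "f u \<le> 0" for u by (simp add: not_less)
    have hC: "h v > 0" if "v \<in> C" "f v \<ge> 0" for v
    proof -
      have "xp v \<noteq> 0" using xnz that by blast
      then have "e v > 0" unfolding e_def by simp
      then have "b * e v > 0" using b by simp
      then show ?thesis using hmarg[OF that(2)] by linarith
    qed
    obtain a where a: "a \<ge> 0" and aC: "\<And>v. v \<in> C \<Longrightarrow> h v \<ge> a * f v"
    proof (cases "C \<inter> {v. h v \<le> 0} = {}")
      case True
      show ?thesis
      proof (rule that[of 0])
        fix v assume "v \<in> C"
        then have "h v > 0" using True by auto
        then show "h v \<ge> 0 * f v" by simp
      qed simp
    next
      case False
      have contH: "continuous_on S h" for S unfolding h_def
        by (intro continuous_intros contg conte)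
      have compD: "compact (C \<inter> {v. h v \<le> 0})"
        by (intro compact_Int_closed compC closed_Collect_le continuous_intros contH)
      obtain v1 where v1: "v1 \<in> C" "h v1 \<le> 0" and v1max: "\<And>v. v \<in> C \<Longrightarrow> h v \<le> 0 \<Longrightarrow> f v \<le> f v1"
        using continuous_attains_sup[OF compD False contf] by blast
      have f1: "f v1 < 0" using fle[of v1] hC[OF v1(1)] v1(2) by force
      have Cne: "C \<noteq> {}" using v1 by blast
      obtain v2 where v2: "v2 \<in> C" "\<And>v. v \<in> C \<Longrightarrow> h v2 \<le> h v"
        using continuous_attains_inf[OF compC Cne contH] by blast
      define a where "a = h v2 / f v1"
      have h2: "h v2 \<le> 0" using v2(2)[OF v1(1)] v1(2) by simp
      have a0: "a \<ge> 0" unfolding a_def using h2 f1 by (simp add: divide_nonpos_neg)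
      show ?thesis
      proof (rule that[OF a0])
        fix v assume v: "v \<in> C"
        show "h v \<ge> a * f v"
        proof (cases "h v \<le> 0")
          case True
          have "f v \<le> f v1" by (rule v1max[OF v True])
          then have "a * f v \<le> a * f v1" using a0 by (rule mult_left_mono)
          also have "a * f v1 = h v2" unfolding a_def using f1 by simp
          also have "\<dots> \<le> h v" by (rule v2(2)[OF v])
          finally show ?thesis .
        next
          case False
          have "a * f v \<le> 0" using a0 fle[of v] by (rule mult_nonneg_nonpos)
          then show ?thesis using False by linarith
        qed
      qed
    qed
    have "h v \<ge> a * f v" for v
    proof -
      have "g v - b * e v \<ge> a * f v"
      proof (rule ext[of "\<lambda>x y d. y - b * d \<ge> a * x"])
        fix u assume "u \<in> C" then show "g u - b * e u \<ge> a * f u" using aC unfolding h_def by blast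
      next
        fix c x y d :: real assume "c > 0"
        moreover have "c*y - b*(c*d) - a*(c*x) = c * (y - b*d - a*x)" by (simp add: algebra_simps)
        ultimately have "(0 \<le> c*y - b*(c*d) - a*(c*x)) = (0 \<le> y - b*d - a*x)"
          by (simp add: zero_le_mult_iff)
        then show "(c*y - b*(c*d) \<ge> a*(c*x)) = (y - b*d \<ge> a*x)" by linarith
      qed simp
      then show ?thesis unfolding h_def .
    qed
    then show ?thesis using that a by blast
  qed
  have "loewner_le (blkdiagI b) (M - a *\<^sub>R N)"
    unfolding loewner_iff
  proof
    fix v
    have "h v \<ge> a * f v" by (rule ha)
    then show "v \<bullet> (M *v v) - a * (v \<bullet> (N *v v)) - b * (xp v \<bullet> xp v) \<ge> 0"
      unfolding h_def f_def g_def e_def by linarith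
  qed
  then show ?thesis using a b by blast
qed


lemma easy:
  fixes M N :: "real^('q::finite + 'r::finite)^('q + 'r)"
  assumes a: "a \<ge> 0" and b: "b > 0" and L: "loewner_le (blkdiagI b) (M - a *\<^sub>R N)"
  shows "Zr N \<subseteq> Zr_plus M"
proof
  fix Z assume Z: "Z \<in> Zr N"
  show "Z \<in> Zr_plus M"
    unfolding Zr_plus_def pd_def
  proof (intro CollectI allI impI)
    fix x :: "real^'q" assume x0: "x \<noteq> 0"
    define v where "v = jn x (Z *v x)"
    have fN: "v \<bullet> (N *v v) \<ge> 0"
      using Z unfolding Zr_def psd_def v_def by (simp add: quad_congr stack_mv)
    have "v \<bullet> (M *v v) - a * (v \<bullet> (N *v v)) - b * (xp v \<bullet> xp v) \<ge> 0"
      using L unfolding loewner_iff by blast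
    moreover have "a * (v \<bullet> (N *v v)) \<ge> 0" using a fN by simp
    moreover have "b * (xp v \<bullet> xp v) > 0" using b x0 unfolding v_def by simp
    ultimately have "v \<bullet> (M *v v) > 0" by linarith
    then show "0 < x \<bullet> ((transpose (stackI Z) ** M ** stackI Z) *v x)"
      unfolding v_def by (simp add: quad_congr stack_mv)
  qed
qed

theorem mainTheorem13:
  fixes M N :: "real^('q::finite + 'r::finite)^('q + 'r)"
  assumes "symmetric_mat M" and "symmetric_mat N"
  shows "((\<exists>\<alpha> \<beta>. \<alpha> \<ge> 0 \<and> \<beta> > 0 \<and> loewner_le (blkdiagI \<beta>) (M - \<alpha> *\<^sub>R N))
            \<longrightarrow> Zr N \<subseteq> Zr_plus M)
       \<and> (N \<in> PiSet \<and> loewner_le (blk22 M) 0 \<longrightarrow>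
            (Zr N \<subseteq> Zr_plus M \<longleftrightarrow>
             (\<exists>\<alpha> \<beta>. \<alpha> \<ge> 0 \<and> \<beta> > 0 \<and> loewner_le (blkdiagI \<beta>) (M - \<alpha> *\<^sub>R N))))"
  using easy hard[OF assms] by blast

end
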